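(* Let $k\geq0$ and choose one representative $u$ in each orbit $[u]\in[n]^{k+1}/\mathbb{Z}_{k+1}$. Then the set $B=\bigsqcup_{[u]\in[n]^{k+1}/\mathbb{Z}_{k+1}}B_{[u]}$, where \[ B_{[u]}=\{(I-R)e_v=e_v-e_{Rv}\,:\,v\in[u]\setminus\{u\}\}, \] is a basis of $\mathrm{ran}\big((I-R)|_{(\mathbb{C}^n)^{\otimes(k+1)}}\big)$. Consequently, the set $\widetilde B=\bigsqcup_{[u]\in[n]^{k+1}/\mathbb{Z}_{k+1}}\widetilde B_{[u]}$, where \[ \widetilde B_{[u]}=\Big\{\big(\delta_{j,i_1}e_{i_2\cdots i_{k+1}}-2\delta_{j,i_{k+1}}e_{i_1\cdots i_k}+\delta_{j,i_k}e_{i_{k+1}i_1\cdots i_{k-1}}\big)_{1\leq j\leq n}\ :\ i_1i_2\cdots i_{k+1}\in[u]\setminus\{u\}\Big\}, \] is a basis of $\mathcal{X}^{(n)}_k$.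
   Context: Let $\{e_1,\dots,e_n\}$ be an orthonormal basis of $\mathbb{C}^n$. For a word $w=i_1\cdots i_p$ over $[n]=\{1,\dots,n\}$, $e_w=e_{i_1}\otimes\cdots\otimes e_{i_p}\in(\mathbb{C}^n)^{\otimes p}$ (and $e_\epsilon=1$ the vacuum vector of the full Fock space $\mathcal{F}(\mathbb{C}^n)=\mathbb{C}1\oplus\bigoplus_{p\geq1}(\mathbb{C}^n)^{\otimes p}$); $[n]^p$ is the set of words of length $p$. $R$ denotes the cyclic rotation, both on words, $R(i_1\cdots i_{p-1}i_p)=i_pi_1\cdots i_{p-1}$, and on tensors, $R e_{i_1\cdots i_p}=e_{i_pi_1\cdots i_{p-1}}$ (extended linearly); $I$ is the identity. The group $\mathbb{Z}_{k+1}=\mathbb{Z}/(k+1)\mathbb{Z}$ acts on $[n]^{k+1}$ through $R$; $[u]$ is the orbit of $u$ and $[n]^{k+1}/\mathbb{Z}_{k+1}$ the set of orbits. Let $l_je_w=e_{jw}$ and $r_je_w=e_{wj}$ be the left and right creation operators on $\mathcal{F}(\mathbb{C}^n)$. For $k\geq1$, $\mathcal{X}^{(n)}_k=\{((l_j^*-r_j^* )\xi)_{j=1}^n:\xi\in(\mathbb{C}^n)^{\otimes(k+1)}\}\subset[(\mathbb{C}^n)^{\otimes k}]^n$, and $\mathcal{X}^{(n)}_0=\{0\}$. $\delta_{j,i}$ is the Kronecker delta. *)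

theory Defs
  imports Complex_Main "HOL-Library.Function_Algebras"
begin

(* Letters are 1..n; a word is a list; e_w is coordinate vector; tensors of
   degree p are complex functions on words supported on words of length p over [n]. *)

definition words :: "nat \<Rightarrow> nat \<Rightarrow> nat list set" where
  "words n p = {w. length w = p \<and> set w \<subseteq> {1..n}}"

definition rotw :: "nat list \<Rightarrow> nat list" where
  "rotw w = (if w = [] then [] else last w # butlast w)"

definition orbit :: "nat list \<Rightarrow> nat list set" where
  "orbit w = {(rotw ^^ m) w | m. True}"

definition ebas :: "nat list \<Rightarrow> nat list \<Rightarrow> complex" where
  "ebas w = (\<lambda>x. if x = w then 1 else 0)"

definition tens :: "nat \<Rightarrow> nat \<Rightarrow> (nat list \<Rightarrow> complex) set" where
  "tens n p = {f. \<forall>x. f x \<noteq> 0 \<longrightarrow> x \<in> words n p}"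

definition scaleT :: "complex \<Rightarrow> (nat list \<Rightarrow> complex) \<Rightarrow> (nat list \<Rightarrow> complex)" where
  "scaleT c f = (\<lambda>x. c * f x)"

(* R on tensors, linear extension of R e_w = e_{R w}: coordinates (R f)(y) = f (R^{-1} y) *)
definition Rt :: "(nat list \<Rightarrow> complex) \<Rightarrow> (nat list \<Rightarrow> complex)" where
  "Rt f = (\<lambda>y. f (rotate1 y))"

definition ranIR :: "nat \<Rightarrow> nat \<Rightarrow> (nat list \<Rightarrow> complex) set" where
  "ranIR n p = (\<lambda>\<xi>. \<xi> - Rt \<xi>) ` tens n p"

(* adjoints of the creation operators: l_j^* e_{jw} = e_w, r_j^* e_{wj} = e_w, else 0 *)
definition lstar :: "nat \<Rightarrow> (nat list \<Rightarrow> complex) \<Rightarrow> (nat list \<Rightarrow> complex)" where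
  "lstar j f = (\<lambda>x. f (j # x))"

definition rstar :: "nat \<Rightarrow> (nat list \<Rightarrow> complex) \<Rightarrow> (nat list \<Rightarrow> complex)" where
  "rstar j f = (\<lambda>x. f (x @ [j]))"

(* elements of [(C^n)^{\<otimes> k}]^n are families indexed by j \<in> {1..n} (zero outside) *)
definition scaleV :: "complex \<Rightarrow> (nat \<Rightarrow> nat list \<Rightarrow> complex) \<Rightarrow> (nat \<Rightarrow> nat list \<Rightarrow> complex)" where
  "scaleV c F = (\<lambda>j x. c * F j x)"

definition Xspace :: "nat \<Rightarrow> nat \<Rightarrow> (nat \<Rightarrow> nat list \<Rightarrow> complex) set" where
  "Xspace n k = (if k = 0 then {0} else
     {(\<lambda>j. if j \<in> {1..n} then lstar j \<xi> - rstar j \<xi> else 0) | \<xi>. \<xi> \<in> tens n (k + 1)})"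

definition Bvec :: "nat list \<Rightarrow> nat list \<Rightarrow> complex" where
  "Bvec v = ebas v - ebas (rotw v)"

(* element of tilde B_[u] attached to v = i_1 ... i_{k+1}  (i_m = v ! (m-1)) *)
definition Btil :: "nat \<Rightarrow> nat list \<Rightarrow> nat \<Rightarrow> nat list \<Rightarrow> complex" where
  "Btil k v = (\<lambda>j x.
      (if j = v ! 0 then ebas (drop 1 v) x else 0)
      - 2 * (if j = v ! k then ebas (take k v) x else 0)
      + (if j = v ! (k - 1) then ebas ((v ! k) # take (k - 1) v) x else 0))"

definition basis_family :: "(complex \<Rightarrow> 'b \<Rightarrow> 'b::ab_group_add) \<Rightarrow> 'i set \<Rightarrow> ('i \<Rightarrow> 'b) \<Rightarrow> 'b set \<Rightarrow> bool" where
  "basis_family s I f V \<longleftrightarrow>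
     inj_on f I \<and> \<not> module.dependent s (f ` I) \<and> module.span s (f ` I) = V"

end

theory Submission
  imports Defs
begin

lemma sum_fun_apply: "(sum f A) x = (\<Sum>a\<in>A. f a x)"
  by (induct A rule: infinite_finite_induct) auto

lemma module_scaleT: "module scaleT"
  by unfold_locales (auto simp: scaleT_def fun_eq_iff algebra_simps)

lemma module_scaleV: "module scaleV"
  by unfold_locales (auto simp: scaleV_def fun_eq_iff algebra_simps)

lemma rotw_rotate1[simp]: "rotw (rotate1 x) = x"
  by (cases x) (auto simp: rotw_def)

lemma rotate1_rotw[simp]: "rotate1 (rotw x) = x"
  by (cases x rule: rev_cases) (auto simp: rotw_def)

lemma rotw_eq_iff: "rotw v = x \<longleftrightarrow> v = rotate1 x"
  by (metis rotw_rotate1 rotate1_rotw)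

lemma finite_words: "finite (words n p)"
proof -
  have "words n p = {xs. set xs \<subseteq> {1..n} \<and> length xs = p}"
    by (auto simp: words_def)
  then show ?thesis using finite_lists_length_eq[of "{1..n}" p] by simp
qed

lemma words_rotate1[simp]: "rotate1 x \<in> words n p \<longleftrightarrow> x \<in> words n p"
  by (simp add: words_def)

lemma words_rotw[simp]: "rotw x \<in> words n p \<longleftrightarrow> x \<in> words n p"
  by (metis words_rotate1 rotate1_rotw)

lemma words_rotate[simp]: "rotate m x \<in> words n p \<longleftrightarrow> x \<in> words n p"
  by (simp add: words_def)

lemma tens_zero: "f \<in> tens n p \<Longrightarrow> x \<notin> words n p \<Longrightarrow> f x = 0"
  by (auto simp: tens_def)

lemma tens_add: assumes "f \<in> tens n p" "g \<in> tens n p" shows "f + g \<in> tens n p"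
  unfolding tens_def
proof (intro CollectI allI impI)
  fix x assume "(f + g) x \<noteq> 0"
  then have "f x \<noteq> 0 \<or> g x \<noteq> 0" by auto
  then show "x \<in> words n p" using assms unfolding tens_def by blast
qed

lemma tens_scale: assumes "f \<in> tens n p" shows "scaleT c f \<in> tens n p"
  unfolding tens_def
proof (intro CollectI allI impI)
  fix x assume "scaleT c f x \<noteq> 0"
  then have "f x \<noteq> 0" by (simp add: scaleT_def)
  then show "x \<in> words n p" using assms unfolding tens_def by blast
qed

lemma rotate_full: assumes "f \<in> tens n p" shows "f (rotate p y) = f y"
proof (cases "length y = p")
  case True then show ?thesis by simp
next
  case False
  then have "y \<notin> words n p" "rotate p y \<notin> words n p" by (auto simp: words_def)
  then show ?thesis using tens_zero[OF assms] by simp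
qed

lemma Bvec_alt: "Bvec v = (\<lambda>x. ebas v x - ebas v (rotate1 x))"
  by (auto simp: Bvec_def ebas_def fun_eq_iff rotw_eq_iff)

lemma Bvec_sum:
  assumes "finite J" "\<forall>x. c x \<noteq> 0 \<longrightarrow> x \<in> J"
  shows "(\<Sum>v\<in>J. scaleT (c v) (Bvec v)) = (\<lambda>x. c x - c (rotate1 x))"
proof
  fix x
  have "(\<Sum>v\<in>J. scaleT (c v) (Bvec v)) x
     = (\<Sum>v\<in>J. (if v = x then c v else 0) - (if v = rotate1 x then c v else 0))"
    unfolding sum_fun_apply by (rule sum.cong) (auto simp: scaleT_def Bvec_alt ebas_def)
  also have "\<dots> = c x - c (rotate1 x)"
  proof -
    have z: "c y = 0" if "y \<notin> J" for y using assms(2) that by blast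
    show ?thesis using assms(1) by (auto simp: sum_subtractf z)
  qed
  finally show "(\<Sum>v\<in>J. scaleT (c v) (Bvec v)) x = c x - c (rotate1 x)" .
qed

lemma funpow_rotw_words: "w \<in> words n p \<Longrightarrow> (rotw^^m) w \<in> words n p"
  by (induct m) auto

lemma inv_orbit: "\<forall>x. c x = c (rotate1 x) \<Longrightarrow> c ((rotw^^m) w) = c w"
  by (induct m) (auto, metis rotate1_rotw)

definition avg :: "nat \<Rightarrow> (nat list \<Rightarrow> complex) \<Rightarrow> nat list \<Rightarrow> complex" where
  "avg N f = (\<lambda>y. (\<Sum>m<N. f (rotate m y)) / of_nat N)"

lemma avg_inv: assumes "f \<in> tens n N" shows "avg N f (rotate1 y) = avg N f y"
proof -
  have "(\<Sum>m<N. f (rotate m (rotate1 y))) = (\<Sum>m<N. f (rotate (Suc m) y))"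
    by (simp add: rotate1_rotate_swap)
  also have "\<dots> = (\<Sum>m<Suc N. f (rotate m y)) - f y"
    by (simp only: sum.lessThan_Suc_shift) simp
  also have "\<dots> = (\<Sum>m<N. f (rotate m y))"
    using rotate_full[OF assms, of y] by simp
  finally show ?thesis by (simp add: avg_def)
qed

lemma telesc_id:
  fixes s :: "nat \<Rightarrow> complex"
  shows "(\<Sum>m<N. of_nat (N - Suc m) * (s m - s (Suc m))) = of_nat N * s 0 - (\<Sum>m<N. s m)"
proof (induct N)
  case 0 then show ?case by simp
next
  case (Suc N)
  have "(\<Sum>m<Suc N. of_nat (Suc N - Suc m) * (s m - s (Suc m)))
      = (\<Sum>m<N. of_nat (Suc N - Suc m) * (s m - s (Suc m)))" by simp
  also have "\<dots> = (\<Sum>m<N. of_nat (N - Suc m) * (s m - s (Suc m)) + (s m - s (Suc m)))"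
    by (rule sum.cong) (auto simp: Suc_diff_Suc algebra_simps)
  also have "\<dots> = of_nat N * s 0 - (\<Sum>m<N. s m) + (s 0 - s N)"
    by (simp only: sum.distrib Suc.hyps sum_lessThan_telescope')
  also have "\<dots> = of_nat (Suc N) * s 0 - (\<Sum>m<Suc N. s m)"
    by (simp add: algebra_simps)
  finally show ?case .
qed

lemma avg_ran:
  assumes "f \<in> tens n N" "N > 0"
  shows "\<exists>\<eta> \<in> tens n N. \<forall>y. f y - avg N f y = \<eta> y - \<eta> (rotate1 y)"
proof
  define \<eta> where "\<eta> = (\<lambda>y. \<Sum>m<N. of_nat (N - Suc m) / of_nat N * f (rotate m y))"
  show "\<eta> \<in> tens n N"
    unfolding tens_def \<eta>_def
  proof (clarify)
    fix x assume "(\<Sum>m<N. of_nat (N - Suc m) / of_nat N * f (rotate m x)) \<noteq> 0"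
    then obtain m where "of_nat (N - Suc m) / of_nat N * f (rotate m x) \<noteq> 0"
      by (rule sum.not_neutral_contains_not_neutral)
    then have "f (rotate m x) \<noteq> 0" by auto
    then show "x \<in> words n N" using assms(1) by (auto simp: tens_def)
  qed
  show "\<forall>y. f y - avg N f y = \<eta> y - \<eta> (rotate1 y)"
  proof
    fix y
    define s where "s m = f (rotate m y)" for m
    have e1: "\<eta> y = (\<Sum>m<N. of_nat (N - Suc m) / of_nat N * s m)" by (simp add: \<eta>_def s_def)
    have e2: "\<eta> (rotate1 y) = (\<Sum>m<N. of_nat (N - Suc m) / of_nat N * s (Suc m))"
      by (simp add: \<eta>_def s_def rotate1_rotate_swap)
    have "\<eta> y - \<eta> (rotate1 y) = (\<Sum>m<N. of_nat (N - Suc m) / of_nat N * (s m - s (Suc m)))"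
      unfolding e1 e2 sum_subtractf[symmetric] right_diff_distrib ..
    also have "\<dots> = (\<Sum>m<N. of_nat (N - Suc m) * (s m - s (Suc m))) / of_nat N"
      by (simp add: sum_divide_distrib)
    also have "\<dots> = (of_nat N * s 0 - (\<Sum>m<N. s m)) / of_nat N" by (simp only: telesc_id)
    also have "\<dots> = f y - avg N f y"
      using assms(2) by (simp add: avg_def s_def diff_divide_distrib)
    finally show "f y - avg N f y = \<eta> y - \<eta> (rotate1 y)" by simp
  qed
qed

lemma inv_ran_zero:
  assumes "c \<in> tens n N" "N > 0" and inv: "\<forall>x. c x - c (rotate1 x) = c (rotate1 x) - c (rotate1 (rotate1 x))"
  shows "c y - c (rotate1 y) = 0"
proof -
  define g where "g x = c x - c (rotate1 x)" for x
  have ginv: "g (rotate1 x) = g x" for x using inv unfolding g_def by metis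
  have gi: "g (rotate m y) = g y" for m
    by (induct m) (simp_all add: ginv)
  have "of_nat N * g y = (\<Sum>m<N. g (rotate m y))" using gi by simp
  also have "\<dots> = (\<Sum>m<N. c (rotate m y) - c (rotate (Suc m) y))" by (simp add: g_def)
  also have "\<dots> = c (rotate 0 y) - c (rotate N y)"
    by (rule sum_lessThan_telescope')
  also have "\<dots> = 0" using rotate_full[OF assms(1)] by simp
  finally have "of_nat N * g y = 0" .
  then have "g y = 0" using assms(2) by simp
  then show ?thesis unfolding g_def .
qed


definition Tm :: "nat \<Rightarrow> (nat list \<Rightarrow> complex) \<Rightarrow> nat \<Rightarrow> nat list \<Rightarrow> complex" where
  "Tm n \<xi> = (\<lambda>j. if j \<in> {1..n} then lstar j \<xi> - rstar j \<xi> else 0)"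

lemma Tm_apply: "Tm n \<xi> j x = (if j \<in> {1..n} then \<xi> (j # x) - \<xi> (x @ [j]) else 0)"
  by (simp add: Tm_def lstar_def rstar_def)

lemma Tm_sum: "Tm n (\<Sum>v\<in>J. scaleT (c v) (G v)) = (\<Sum>v\<in>J. scaleV (c v) (Tm n (G v)))"
  by (auto simp: fun_eq_iff Tm_apply sum_fun_apply scaleT_def scaleV_def sum_subtractf right_diff_distrib)

lemma Tm_add: "Tm n (f + g) = Tm n f + Tm n g"
  by (auto simp: fun_eq_iff Tm_apply)

lemma Tm_diff: "Tm n (f - g) = Tm n f - Tm n g"
  by (auto simp: fun_eq_iff Tm_apply)

lemma Tm_scale: "Tm n (scaleT c f) = scaleV c (Tm n f)"
  by (auto simp: fun_eq_iff Tm_apply scaleT_def scaleV_def right_diff_distrib)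

lemma Tm_zero: "Tm n 0 = 0"
  by (auto simp: fun_eq_iff Tm_apply)

lemma Tm_kernel:
  assumes "\<xi> \<in> tens n p" "Tm n \<xi> = 0" shows "\<xi> x = \<xi> (rotate1 x)"
proof (cases x)
  case Nil then show ?thesis by simp
next
  case (Cons j y)
  show ?thesis
  proof (cases "j \<in> {1..n}")
    case True
    have "Tm n \<xi> j y = 0" using assms(2) by simp
    then show ?thesis using True Cons by (simp add: Tm_apply)
  next
    case False
    then have "j # y \<notin> words n p" "y @ [j] \<notin> words n p" by (auto simp: words_def)
    then show ?thesis using Cons tens_zero[OF assms(1)] by simp
  qed
qed

lemma Tm_inv: assumes "\<forall>x. \<xi> x = \<xi> (rotate1 x)" shows "Tm n \<xi> = 0"
proof -
  have "\<xi> (j # x) = \<xi> (x @ [j])" for j x using assms[rule_format, of "j # x"] by simp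
  then show ?thesis by (auto simp: fun_eq_iff Tm_apply)
qed

lemma Tm_Bvec:
  assumes "0 < k" "v \<in> words n (Suc k)" shows "Tm n (Bvec v) = Btil k v"
proof -
  have lv: "length v = Suc k" and sv: "set v \<subseteq> {1..n}" using assms(2) by (auto simp: words_def)
  obtain xs p q where v: "v = xs @ [p, q]"
  proof -
    from lv obtain v1 q where "v = v1 @ [q]" by (metis length_0_conv nat.distinct(1) rev_exhaust)
    moreover with lv assms(1) obtain xs p where "v1 = xs @ [p]"
      by (metis Suc_inject length_0_conv length_append_singleton less_numeral_extra(3) rev_exhaust)
    ultimately show ?thesis using that by simp
  qed
  obtain a ys where v2: "v = a # ys" using lv by (cases v) auto
  have lx: "length xs = k - 1" using lv v by simp
  have f1: "v ! k = q" "v ! (k - 1) = p" "take k v = xs @ [p]" "take (k - 1) v = xs"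
    using lx assms(1) v by (auto simp: nth_append)
  have f2: "v ! 0 = a" "drop 1 v = ys" using v2 by auto
  have f3: "rotw v = q # xs @ [p]" using v by (simp add: rotw_def butlast_append)
  have inn: "a \<in> {1..n}" "p \<in> {1..n}" "q \<in> {1..n}"
  proof -
    have "a \<in> set v" using v2 by simp
    moreover have "p \<in> set v" "q \<in> set v" using v by simp_all
    ultimately
    show "a \<in> {1..n}" "p \<in> {1..n}" "q \<in> {1..n}" using sv by blast+
  qed
  show ?thesis
  proof (rule ext, rule ext)
    fix j x
    have e1: "(j # x = v) \<longleftrightarrow> (j = a \<and> x = ys)" using v2 by auto
    have e2: "(j # x = q # xs @ [p]) \<longleftrightarrow> (j = q \<and> x = xs @ [p])" by auto
    have e3: "(x @ [j] = v) \<longleftrightarrow> (x = xs @ [p] \<and> j = q)" using v by auto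
    have e4: "(x @ [j] = q # xs @ [p]) \<longleftrightarrow> (x = q # xs \<and> j = p)"
      by (metis append_Cons append1_eq_conv)
    show "Tm n (Bvec v) j x = Btil k v j x"
      unfolding Tm_apply Bvec_def Btil_def ebas_def f1 f2 f3 fun_diff_def
      using e1 e2 e3 e4 inn by auto
  qed
qed

lemma rotw_inv_orbit: "rotw v = v \<Longrightarrow> orbit v = {v}"
proof -
  assume a: "rotw v = v"
  have "(rotw ^^ m) v = v" for m by (induct m) (simp_all add: a)
  then show ?thesis unfolding orbit_def by auto
qed


theorem proposition3p7:
  fixes n k :: nat and rep :: "nat list \<Rightarrow> nat list"
  assumes rep_in: "\<forall>w \<in> words n (k + 1). rep w \<in> orbit w"
    and rep_const: "\<forall>w \<in> words n (k + 1). \<forall>v \<in> orbit w. rep v = rep w"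
  shows "basis_family scaleT {v \<in> words n (k + 1). v \<noteq> rep v} Bvec (ranIR n (k + 1))
       \<and> basis_family scaleV {v \<in> words n (k + 1). v \<noteq> rep v} (Btil k) (Xspace n k)"
proof -
  let ?W = "words n (k + 1)"
  let ?J = "{v \<in> words n (k + 1). v \<noteq> rep v}"
  have finJ: "finite ?J" using finite_words by simp
  have rep_rep: "rep (rep w) = rep w" if "w \<in> ?W" for w
    using rep_const rep_in that by blast
  have rep_rot: "rep (rotate1 w) = rep w" if "w \<in> ?W" for w
  proof -
    have "w \<in> orbit (rotate1 w)" unfolding orbit_def
    proof (intro CollectI exI conjI)
      show "w = (rotw ^^ 1) (rotate1 w)" by simp
    qed simp
    then show ?thesis using rep_const that by (metis words_rotate1)
  qed
  have invz: "c x = 0" if supp: "\<forall>x. c x \<noteq> 0 \<longrightarrow> x \<in> ?J" and inv: "\<forall>x. c x = c (rotate1 x)" for c x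
  proof (cases "x \<in> ?W")
    case True
    from rep_in True obtain m where m: "rep x = (rotw^^m) x" unfolding orbit_def by blast
    have "c (rep x) = c x" unfolding m by (rule inv_orbit[OF inv])
    moreover have "c (rep x) = 0" using supp rep_rep[OF True] by auto
    ultimately show ?thesis by simp
  next
    case False then show ?thesis using supp by auto
  qed
  have P1: "\<exists>c. (\<forall>x. c x \<noteq> 0 \<longrightarrow> x \<in> ?J) \<and> (\<lambda>x. c x - c (rotate1 x)) = (\<lambda>x. \<eta> x - \<eta> (rotate1 x))"
    if "\<eta> \<in> tens n (k+1)" for \<eta>
  proof (intro exI conjI)
    let ?c = "\<lambda>x. if x \<in> ?W then \<eta> x - \<eta> (rep x) else 0"
    show "\<forall>x. ?c x \<noteq> 0 \<longrightarrow> x \<in> ?J" by auto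
    show "(\<lambda>x. ?c x - ?c (rotate1 x)) = (\<lambda>x. \<eta> x - \<eta> (rotate1 x))"
    proof
      fix x show "?c x - ?c (rotate1 x) = \<eta> x - \<eta> (rotate1 x)"
      proof (cases "x \<in> ?W")
        case True then show ?thesis using rep_rot[OF True] by simp
      next
        case False then show ?thesis using tens_zero[OF that] by simp
      qed
    qed
  qed
  have Bsum: "(\<Sum>v\<in>?J. scaleT (c v) (Bvec v)) = (\<lambda>x. c x - c (rotate1 x))"
    if "\<forall>x. c x \<noteq> 0 \<longrightarrow> x \<in> ?J" for c
    using Bvec_sum[OF finJ that] .
  have ebas_tens: "ebas v \<in> tens n (k+1)" if "v \<in> ?W" for v
    using that by (auto simp: tens_def ebas_def)
  have Bvec_tens: "Bvec v \<in> tens n (k+1)" if "v \<in> ?W" for v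
    using that by (auto simp: tens_def Bvec_def ebas_def)
  have Bvec_ran: "Bvec v \<in> ranIR n (k+1)" if "v \<in> ?W" for v
    unfolding ranIR_def using ebas_tens[OF that]
    by (intro image_eqI[where x="ebas v"]) (simp_all add: Bvec_alt Rt_def fun_diff_def)
  have Jrot: "rotw v \<noteq> v" if "v \<in> ?J" for v
  proof
    assume "rotw v = v"
    then have "orbit v = {v}" by (rule rotw_inv_orbit)
    then show False using rep_in that by auto
  qed
  have Bvv: "Bvec v v = 1" if "v \<in> ?J" for v
    using Jrot[OF that] by (simp add: Bvec_def ebas_def)
  have inj1: "inj_on Bvec ?J"
  proof (rule inj_onI)
    fix v w assume v: "v \<in> ?J" and w: "w \<in> ?J" and e: "Bvec v = Bvec w"
    have "Bvec w v = 1" using Bvv[OF v] e by simp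
    then show "v = w" by (auto simp: Bvec_def ebas_def split: if_splits)
  qed
  have ind1: "\<not> module.dependent scaleT (Bvec ` ?J)"
  proof
    assume "module.dependent scaleT (Bvec ` ?J)"
    then obtain u where u1: "\<exists>b\<in>Bvec ` ?J. u b \<noteq> 0"
      and u2: "(\<Sum>b\<in>Bvec ` ?J. scaleT (u b) b) = 0"
      using module.dependent_finite[OF module_scaleT, of "Bvec ` ?J"] finJ by auto
    define c where "c x = (if x \<in> ?J then u (Bvec x) else 0)" for x
    have supp: "\<forall>x. c x \<noteq> 0 \<longrightarrow> x \<in> ?J" by (simp add: c_def)
    have "(\<Sum>v\<in>?J. scaleT (c v) (Bvec v)) = (\<Sum>b\<in>Bvec ` ?J. scaleT (u b) b)"
      unfolding sum.reindex[OF inj1] by (rule sum.cong) (auto simp: c_def)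
    then have "(\<lambda>x. c x - c (rotate1 x)) = 0" using u2 Bsum[OF supp] by simp
    then have "\<forall>x. c x = c (rotate1 x)" by (simp add: fun_eq_iff)
    then have "c x = 0" for x using invz supp by blast
    then have c0: "c x = 0" for x .
    from u1 obtain v where v: "v \<in> ?J" "u (Bvec v) \<noteq> 0" by blast
    have "c v = 0" by (rule c0)
    then show False using v by (simp add: c_def)
  qed
  have span1: "module.span scaleT (Bvec ` ?J) = ranIR n (k+1)"
  proof
    show "module.span scaleT (Bvec ` ?J) \<subseteq> ranIR n (k+1)"
    proof (rule module.span_minimal[OF module_scaleT])
      show "Bvec ` ?J \<subseteq> ranIR n (k+1)" using Bvec_ran by auto
      show "module.subspace scaleT (ranIR n (k+1))"
      proof (rule module.subspaceI[OF module_scaleT])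
        show "0 \<in> ranIR n (k+1)" unfolding ranIR_def
          by (rule image_eqI[where x=0]) (auto simp: tens_def Rt_def fun_eq_iff)
      next
        fix x y assume "x \<in> ranIR n (k+1)" "y \<in> ranIR n (k+1)"
        then obtain f g where f: "f \<in> tens n (k+1)" "x = f - Rt f"
          and g: "g \<in> tens n (k+1)" "y = g - Rt g" unfolding ranIR_def by auto
        show "x + y \<in> ranIR n (k+1)" unfolding ranIR_def using f g
          by (intro image_eqI[where x="f+g"] tens_add) (simp_all add: Rt_def fun_eq_iff)
      next
        fix c x assume "x \<in> ranIR n (k+1)"
        then obtain f where f: "f \<in> tens n (k+1)" "x = f - Rt f" unfolding ranIR_def by auto
        show "scaleT c x \<in> ranIR n (k+1)" unfolding ranIR_def using f
          by (intro image_eqI[where x="scaleT c f"] tens_scale)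
            (simp_all add: Rt_def scaleT_def fun_eq_iff right_diff_distrib)
      qed
    qed
    show "ranIR n (k+1) \<subseteq> module.span scaleT (Bvec ` ?J)"
    proof
      fix x assume "x \<in> ranIR n (k+1)"
      then obtain f where f: "f \<in> tens n (k+1)" "x = f - Rt f" unfolding ranIR_def by auto
      obtain c where c: "\<forall>x. c x \<noteq> 0 \<longrightarrow> x \<in> ?J"
        "(\<lambda>x. c x - c (rotate1 x)) = (\<lambda>x. f x - f (rotate1 x))" using P1[OF f(1)] by blast
      have "x = (\<Sum>v\<in>?J. scaleT (c v) (Bvec v))"
        using f(2) c(2) Bsum[OF c(1)] by (simp add: Rt_def fun_diff_def)
      also have "\<dots> \<in> module.span scaleT (Bvec ` ?J)"
        by (intro module.span_sum[OF module_scaleT] module.span_scale[OF module_scaleT]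
            module.span_base[OF module_scaleT]) auto
      finally show "x \<in> module.span scaleT (Bvec ` ?J)" .
    qed
  qed
  have part2: "basis_family scaleV ?J (Btil k) (Xspace n k)"
  proof (cases "k = 0")
    case True
    have J0: "?J = {}"
    proof (rule ccontr)
      assume "?J \<noteq> {}"
      then obtain v where v: "v \<in> ?J" by blast
      then have "length v = 1" using True by (simp add: words_def)
      then obtain a where "v = [a]" by (cases v) auto
      then have "rotw v = v" by (simp add: rotw_def)
      then show False using Jrot[OF v] by simp
    qed
    show ?thesis unfolding basis_family_def J0 using True
      by (simp add:  Xspace_def module.span_empty[OF module_scaleV]
          module.independent_empty[OF module_scaleV])
  next
    case False
    then have kpos: "0 < k" by simp
    have Xs: "Xspace n k = Tm n ` tens n (k+1)" using False by (auto simp: Xspace_def Tm_def)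
    have BT: "Btil k v = Tm n (Bvec v)" if "v \<in> ?W" for v using Tm_Bvec[OF kpos, of v n] that by simp
    have TZ: "(\<lambda>x. c x - c (rotate1 x)) = 0"
      if c: "c \<in> tens n (k+1)" and t: "Tm n (\<lambda>x. c x - c (rotate1 x)) = 0" for c
    proof -
      let ?g = "\<lambda>x. c x - c (rotate1 x)"
      have gt: "?g \<in> tens n (k+1)" unfolding tens_def
      proof (clarify)
        fix x assume "c x - c (rotate1 x) \<noteq> 0"
        then have "c x \<noteq> 0 \<or> c (rotate1 x) \<noteq> 0" by auto
        then show "x \<in> ?W" using c unfolding tens_def by auto
      qed
      have inv: "\<forall>x. c x - c (rotate1 x) = c (rotate1 x) - c (rotate1 (rotate1 x))"
        using Tm_kernel[OF gt t] by blast
      have "?g y = 0" for y using inv_ran_zero[OF c _ inv] by simp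
      then show ?thesis by (simp add: fun_eq_iff)
    qed
    have inj2: "inj_on (Btil k) ?J"
    proof (rule inj_onI)
      fix v w assume v: "v \<in> ?J" and w: "w \<in> ?J" and e: "Btil k v = Btil k w"
      let ?c = "ebas v - ebas w"
      have ct: "?c \<in> tens n (k+1)" using v w by (auto simp: tens_def ebas_def)
      have geq: "Bvec v - Bvec w = (\<lambda>x. ?c x - ?c (rotate1 x))" by (simp add: Bvec_alt fun_eq_iff)
      have "Tm n (Bvec v - Bvec w) = 0" using e BT v w by (simp add: Tm_diff)
      then have "Tm n (\<lambda>x. ?c x - ?c (rotate1 x)) = 0" using geq by simp
      then have "(\<lambda>x. ?c x - ?c (rotate1 x)) = 0" by (rule TZ[OF ct])
      then have "Bvec v = Bvec w" using geq by simp
      then show "v = w" using inj1 v w by (auto dest: inj_onD)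
    qed
    have ind2: "\<not> module.dependent scaleV (Btil k ` ?J)"
    proof
      assume "module.dependent scaleV (Btil k ` ?J)"
      then obtain u where u1: "\<exists>b\<in>Btil k ` ?J. u b \<noteq> 0"
        and u2: "(\<Sum>b\<in>Btil k ` ?J. scaleV (u b) b) = 0"
        using module.dependent_finite[OF module_scaleV, of "Btil k ` ?J"] finJ by auto
      define c where "c x = (if x \<in> ?J then u (Btil k x) else 0)" for x
      have supp: "\<forall>x. c x \<noteq> 0 \<longrightarrow> x \<in> ?J" by (simp add: c_def)
      have ct: "c \<in> tens n (k+1)" using supp by (auto simp: tens_def)
      have "Tm n (\<lambda>x. c x - c (rotate1 x)) = Tm n (\<Sum>v\<in>?J. scaleT (c v) (Bvec v))"
        using Bsum[OF supp] by simp
      also have "\<dots> = (\<Sum>v\<in>?J. scaleV (c v) (Tm n (Bvec v)))" by (rule Tm_sum)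
      also have "\<dots> = (\<Sum>v\<in>?J. scaleV (u (Btil k v)) (Btil k v))"
        by (rule sum.cong) (auto simp: c_def BT)
      also have "\<dots> = (\<Sum>b\<in>Btil k ` ?J. scaleV (u b) b)" unfolding sum.reindex[OF inj2] by (simp add: comp_def)
      also have "\<dots> = 0" by (rule u2)
      finally have "(\<lambda>x. c x - c (rotate1 x)) = 0" by (rule TZ[OF ct])
      then have "\<forall>x. c x = c (rotate1 x)" by (simp add: fun_eq_iff)
      then have "c x = 0" for x using invz supp by blast
      then have c0: "c x = 0" for x .
      from u1 obtain v where v: "v \<in> ?J" "u (Btil k v) \<noteq> 0" by blast
      have "c v = 0" by (rule c0)
      then show False using v by (simp add: c_def)
    qed
    have span2: "module.span scaleV (Btil k ` ?J) = Xspace n k"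
    proof
      show "module.span scaleV (Btil k ` ?J) \<subseteq> Xspace n k"
      proof (rule module.span_minimal[OF module_scaleV])
        show "Btil k ` ?J \<subseteq> Xspace n k" unfolding Xs using BT Bvec_tens by auto
        show "module.subspace scaleV (Xspace n k)" unfolding Xs
        proof (rule module.subspaceI[OF module_scaleV])
          show "0 \<in> Tm n ` tens n (k+1)"
            by (rule image_eqI[where x=0]) (auto simp: Tm_zero tens_def)
        next
          fix x y assume "x \<in> Tm n ` tens n (k+1)" "y \<in> Tm n ` tens n (k+1)"
          then obtain f g where f: "f \<in> tens n (k+1)" "x = Tm n f"
            and g: "g \<in> tens n (k+1)" "y = Tm n g" by auto
          show "x + y \<in> Tm n ` tens n (k+1)" using f g
            by (intro image_eqI[where x="f+g"]) (auto simp: Tm_add tens_add)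
        next
          fix c x assume "x \<in> Tm n ` tens n (k+1)"
          then obtain f where f: "f \<in> tens n (k+1)" "x = Tm n f" by auto
          show "scaleV c x \<in> Tm n ` tens n (k+1)" using f
            by (intro image_eqI[where x="scaleT c f"]) (auto simp: Tm_scale tens_scale)
        qed
      qed
      show "Xspace n k \<subseteq> module.span scaleV (Btil k ` ?J)"
      proof
        fix F assume "F \<in> Xspace n k"
        then obtain \<xi> where \<xi>: "\<xi> \<in> tens n (k+1)" "F = Tm n \<xi>" unfolding Xs by auto
        obtain \<eta> where \<eta>: "\<eta> \<in> tens n (k+1)"
          "\<forall>y. \<xi> y - avg (k+1) \<xi> y = \<eta> y - \<eta> (rotate1 y)"
          using avg_ran[OF \<xi>(1)] by auto
        obtain c where c: "\<forall>x. c x \<noteq> 0 \<longrightarrow> x \<in> ?J"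
          "(\<lambda>x. c x - c (rotate1 x)) = (\<lambda>x. \<eta> x - \<eta> (rotate1 x))" using P1[OF \<eta>(1)] by blast
        have h0: "Tm n (avg (k+1) \<xi>) = 0" using avg_inv[OF \<xi>(1)] by (intro Tm_inv) simp
        have "\<xi> = (\<lambda>x. c x - c (rotate1 x)) + avg (k+1) \<xi>"
        proof
          fix x
          have "\<xi> x = (\<xi> x - avg (k+1) \<xi> x) + avg (k+1) \<xi> x" by simp
          also have "\<dots> = (c x - c (rotate1 x)) + avg (k+1) \<xi> x"
            using \<eta>(2) fun_cong[OF c(2), of x] by simp
          finally show "\<xi> x = ((\<lambda>x. c x - c (rotate1 x)) + avg (k+1) \<xi>) x" by simp
        qed
        then have "F = Tm n (\<lambda>x. c x - c (rotate1 x))"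
          using \<xi>(2) h0 by (metis Tm_add add.right_neutral)
        also have "\<dots> = Tm n (\<Sum>v\<in>?J. scaleT (c v) (Bvec v))" using Bsum[OF c(1)] by simp
        also have "\<dots> = (\<Sum>v\<in>?J. scaleV (c v) (Tm n (Bvec v)))" by (rule Tm_sum)
        also have "\<dots> = (\<Sum>v\<in>?J. scaleV (c v) (Btil k v))"
          by (rule sum.cong) (auto simp: BT)
        also have "\<dots> \<in> module.span scaleV (Btil k ` ?J)"
          by (intro module.span_sum[OF module_scaleV] module.span_scale[OF module_scaleV]
              module.span_base[OF module_scaleV]) auto
        finally show "F \<in> module.span scaleV (Btil k ` ?J)" .
      qed
    qed
    show ?thesis unfolding basis_family_def using inj2 ind2 span2 by blast
  qed
  show ?thesis using part2 inj1 ind1 span1 unfolding basis_family_def by blast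
qed

end
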